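(* Let $G$ be an abelian group and let $A$ be a commutative unital Banach algebra with unit $1_A$ possessing a unique maximal ideal. Let $C=(C(g))_{g\in G}$ be a bounded cosine family in $A$, i.e. $C(0)=1_A$, $C(g+h)+C(g-h)=2C(g)C(h)$ for all $g,h\in G$, and $\sup_{g\in G}\Vert C(g)\Vert<\infty$. Then $C$ is scalar: there exists a bounded cosine family $(c(g))_{g\in G}$ with values in $[-1,1]$ such that $C(g)=c(g)1_A$ for all $g\in G$. *)

theory Defs
  imports "HOL-Analysis.Analysis"
begin

definition ring_ideal :: "'a::comm_ring_1 set \<Rightarrow> bool" where
  "ring_ideal I \<longleftrightarrow> 0 \<in> I \<and> (\<forall>x\<in>I. \<forall>y\<in>I. x + y \<in> I) \<and> (\<forall>x\<in>I. - x \<in> I)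
     \<and> (\<forall>a. \<forall>x\<in>I. a * x \<in> I)"

definition maximal_ideal :: "'a::comm_ring_1 set \<Rightarrow> bool" where
  "maximal_ideal M \<longleftrightarrow> ring_ideal M \<and> M \<noteq> UNIV \<and>
     (\<forall>J. ring_ideal J \<and> M \<subseteq> J \<and> J \<noteq> UNIV \<longrightarrow> J = M)"

text \<open>A real unital Banach algebra carries the structure of a complex Banach algebra
  (compatible with its real structure and norm): there is an element j with
  j * j = -1 such that (a + ib) . x := a x + b (j x) is norm-homogeneous.\<close>
definition complex_algebra_structure :: "'a::real_normed_algebra_1 itself \<Rightarrow> bool" where
  "complex_algebra_structure _ \<longleftrightarrow> (\<exists>j::'a. j * j = - 1 \<and>
     (\<forall>a b x. norm (a *\<^sub>R x + b *\<^sub>R (j * x)) = cmod (Complex a b) * norm x))"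

definition cosine_family :: "('g::ab_group_add \<Rightarrow> 'a::real_normed_algebra_1) \<Rightarrow> bool" where
  "cosine_family C \<longleftrightarrow> C 0 = 1 \<and> (\<forall>g h. C (g + h) + C (g - h) = 2 * C g * C h)"

definition bounded_family :: "('g \<Rightarrow> 'a::real_normed_vector) \<Rightarrow> bool" where
  "bounded_family C \<longleftrightarrow> (\<exists>M. \<forall>g. norm (C g) \<le> M)"

end

theory Submission
  imports Defs "HOL-Complex_Analysis.Complex_Analysis"
begin

locale cstr =
  fixes j :: "'a::{real_normed_algebra_1, banach, comm_ring_1}"
  assumes jj: "j * j = - 1"
    and jnorm: "\<And>a b x. norm (a *\<^sub>R x + b *\<^sub>R (j * x)) = cmod (Complex a b) * norm x"
begin

definition cx :: "complex \<Rightarrow> 'a" where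
  "cx z = of_real (Re z) + of_real (Im z) * j"

lemma cx_mult_eq: "cx z * x = Re z *\<^sub>R x + Im z *\<^sub>R (j * x)"
  by (simp add: cx_def distrib_right scaleR_conv_of_real mult.assoc)

lemma norm_cx_mult: "norm (cx z * x) = cmod z * norm x"
  using jnorm[where a="Re z" and b="Im z" and x=x] by (simp add: cx_mult_eq)

lemma norm_cx: "norm (cx z) = cmod z"
  using norm_cx_mult[of z 1] by simp

lemma cx_add: "cx (z + w) = cx z + cx w"
  by (simp add: cx_def algebra_simps)

lemma cx_diff: "cx (z - w) = cx z - cx w"
  by (simp add: cx_def algebra_simps)

lemma cx_minus: "cx (- z) = - cx z"
  by (simp add: cx_def algebra_simps)

lemma cx_mult: "cx (z * w) = cx z * cx w"
proof -
  have "cx z * cx w = of_real (Re z) * of_real (Re w) + (of_real (Re z) * of_real (Im w) + of_real (Im z) * of_real (Re w)) * j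
      + of_real (Im z) * of_real (Im w) * (j * j)"
    by (simp add: cx_def algebra_simps)
  also have "\<dots> = cx (z * w)"
    by (simp add: jj cx_def algebra_simps)
  finally show ?thesis by simp
qed

lemma cx_one[simp]: "cx 1 = 1" by (simp add: cx_def)
lemma cx_zero[simp]: "cx 0 = 0" by (simp add: cx_def)
lemma cx_of_real[simp]: "cx (complex_of_real r) = of_real r" by (simp add: cx_def)
lemma cx_numeral[simp]: "cx (numeral n) = numeral n"
  by (metis cx_of_real of_real_numeral)
lemma cx_power: "cx (z ^ n) = cx z ^ n"
  by (induction n) (simp_all add: cx_mult)
lemma cx_eq_0: "cx z = 0 \<longleftrightarrow> z = 0"
  using norm_cx[of z] by (metis cx_zero norm_eq_zero zero_less_norm_iff)
lemma cx_inv: "z \<noteq> 0 \<Longrightarrow> cx z * cx (1/z) = 1"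
  by (metis cx_mult cx_one divide_self_if times_divide_eq_right mult_1_right)

end

definition hbG :: "'a::real_normed_vector \<Rightarrow> ('a \<times> real) set \<Rightarrow> bool" where
 "hbG v G \<longleftrightarrow> (v, norm v) \<in> G \<and> (\<forall>x a y b. (x,a)\<in>G \<longrightarrow> (y,b)\<in>G \<longrightarrow> (x + y, a + b) \<in> G)
   \<and> (\<forall>x a r. (x,a)\<in>G \<longrightarrow> (r *\<^sub>R x, r * a) \<in> G) \<and> (\<forall>x a. (x,a)\<in>G \<longrightarrow> a \<le> norm x)"

lemma hbG_add: "hbG v G \<Longrightarrow> (x,a)\<in>G \<Longrightarrow> (y,b)\<in>G \<Longrightarrow> (x + y, a + b) \<in> G"
  unfolding hbG_def by blast
lemma hbG_scale: "hbG v G \<Longrightarrow> (x,a)\<in>G \<Longrightarrow> (r *\<^sub>R x, r * a) \<in> G"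
  unfolding hbG_def by blast
lemma hbG_le: "hbG v G \<Longrightarrow> (x,a)\<in>G \<Longrightarrow> a \<le> norm x"
  unfolding hbG_def by blast
lemma hbG_v: "hbG v G \<Longrightarrow> (v, norm v) \<in> G"
  unfolding hbG_def by blast
lemma hbG_0: assumes "hbG v G" shows "(0, 0) \<in> G"
  using hbG_scale[OF assms hbG_v[OF assms], of 0] by simp

lemma hbG_func:
  assumes "hbG v G" "(x,a)\<in>G" "(x,b)\<in>G" shows "a = b"
proof -
  have "(x + (-1) *\<^sub>R x, a + (-1) * b) \<in> G"
    using hbG_add[OF assms(1,2) hbG_scale[OF assms(1,3)]] .
  then have "a - b \<le> 0" using hbG_le[OF assms(1)] by fastforce
  moreover have "(x + (-1) *\<^sub>R x, b + (-1) * a) \<in> G"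
    using hbG_add[OF assms(1,3) hbG_scale[OF assms(1,2)]] .
  then have "b - a \<le> 0" using hbG_le[OF assms(1)] by fastforce
  ultimately show ?thesis by simp
qed

lemma hbG_extend:
  assumes G: "hbG v G" and x1: "x1 \<notin> fst ` G"
  shows "\<exists>G'. hbG v G' \<and> G \<subseteq> G' \<and> G' \<noteq> G"
proof -
  define S where "S = {a - norm (y - x1) | y a. (y,a) \<in> G}"
  define c where "c = Sup S"
  have ne: "S \<noteq> {}" using hbG_v[OF G] unfolding S_def by blast
  have ub: "s \<le> norm (z + x1) - b" if sS: "s \<in> S" and zb: "(z,b) \<in> G" for s z b
  proof -
    obtain y a where s: "s = a - norm (y - x1)" and ya: "(y,a) \<in> G" using sS unfolding S_def by blast
    have "a + b \<le> norm (y + z)" using hbG_le[OF G hbG_add[OF G ya zb]] .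
    also have "\<dots> \<le> norm (y - x1) + norm (z + x1)"
      using norm_triangle_ineq[of "y - x1" "z + x1"] by simp
    finally show ?thesis using s by simp
  qed
  have bdd: "bdd_above S"
    using ub hbG_v[OF G] unfolding bdd_above_def by blast
  have c1: "a - norm (y - x1) \<le> c" if "(y,a) \<in> G" for y a
    unfolding c_def by (rule cSup_upper[OF _ bdd]) (use that S_def in blast)
  have c2: "c \<le> norm (z + x1) - b" if "(z,b) \<in> G" for z b
    unfolding c_def by (rule cSup_least[OF ne]) (use ub that in blast)
  define G' where "G' = {(y + t *\<^sub>R x1, a + t * c) | y a t. (y,a) \<in> G}"
  have dom: "a + t * c \<le> norm (y + t *\<^sub>R x1)" if ya: "(y,a) \<in> G" for y a t
  proof (cases "t = 0")
    case True then show ?thesis using hbG_le[OF G ya] by simp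
  next
    case False
    show ?thesis
    proof (cases "t > 0")
      case True
      have "(inverse t *\<^sub>R y, inverse t * a) \<in> G" using hbG_scale[OF G ya] .
      from c2[OF this] have "c \<le> norm (inverse t *\<^sub>R y + x1) - inverse t * a" .
      then have "t * c \<le> t * (norm (inverse t *\<^sub>R y + x1) - inverse t * a)"
        by (rule mult_left_mono) (use True in simp)
      then have "t * c \<le> t * norm (inverse t *\<^sub>R y + x1) - a"
        using True by (simp add: right_diff_distrib mult.assoc[symmetric])
      also have "t * norm (inverse t *\<^sub>R y + x1) = norm (y + t *\<^sub>R x1)"
      proof -
        have "t * norm (inverse t *\<^sub>R y + x1) = norm (t *\<^sub>R (inverse t *\<^sub>R y + x1))"
          using True by simp
        also have "t *\<^sub>R (inverse t *\<^sub>R y + x1) = y + t *\<^sub>R x1"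
          using True by (simp add: scaleR_add_right)
        finally show ?thesis .
      qed
      finally show ?thesis by simp
    next
      case False
      define s where "s = - t"
      have s: "s > 0" using False \<open>t \<noteq> 0\<close> s_def by simp
      have "(inverse s *\<^sub>R y, inverse s * a) \<in> G" using hbG_scale[OF G ya] .
      from c1[OF this] have "inverse s * a - norm (inverse s *\<^sub>R y - x1) \<le> c" .
      then have "s * (inverse s * a - norm (inverse s *\<^sub>R y - x1)) \<le> s * c"
        using s by (simp add: mult_left_mono)
      then have "a - s * norm (inverse s *\<^sub>R y - x1) \<le> s * c"
        using s by (simp add: algebra_simps)
      also have "s * norm (inverse s *\<^sub>R y - x1) = norm (y - s *\<^sub>R x1)"
      proof -
        have "s * norm (inverse s *\<^sub>R y - x1) = norm (s *\<^sub>R (inverse s *\<^sub>R y - x1))"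
          using s by simp
        also have "s *\<^sub>R (inverse s *\<^sub>R y - x1) = y - s *\<^sub>R x1"
          using s by (simp add: scaleR_diff_right)
        finally show ?thesis .
      qed
      finally show ?thesis using s_def by (simp add: algebra_simps)
    qed
  qed
  have "hbG v G'"
    unfolding hbG_def
  proof (intro conjI allI impI)
    have "(v + 0 *\<^sub>R x1, norm v + 0 * c) \<in> G'" unfolding G'_def using hbG_v[OF G] by blast
    then show "(v, norm v) \<in> G'" by simp
  next
    fix x a y b assume "(x, a) \<in> G'" "(y, b) \<in> G'"
    then obtain x' a' t y' b' t' where
      x: "x = x' + t *\<^sub>R x1" "a = a' + t * c" "(x',a') \<in> G" and
      y: "y = y' + t' *\<^sub>R x1" "b = b' + t' * c" "(y',b') \<in> G"
      unfolding G'_def by blast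
    have "(x' + y', a' + b') \<in> G" using hbG_add[OF G x(3) y(3)] .
    then have "((x'+y') + (t+t') *\<^sub>R x1, (a'+b') + (t+t')*c) \<in> G'" unfolding G'_def by blast
    then show "(x + y, a + b) \<in> G'" unfolding x y
      by (simp add: algebra_simps scaleR_add_left)
  next
    fix x a r assume "(x, a) \<in> G'"
    then obtain x' a' t where
      x: "x = x' + t *\<^sub>R x1" "a = a' + t * c" "(x',a') \<in> G"
      unfolding G'_def by blast
    have "(r *\<^sub>R x', r * a') \<in> G" using hbG_scale[OF G x(3)] .
    then have "(r *\<^sub>R x' + (r*t) *\<^sub>R x1, r * a' + (r*t)*c) \<in> G'" unfolding G'_def by blast
    then show "(r *\<^sub>R x, r * a) \<in> G'" unfolding x
      by (simp add: algebra_simps scaleR_add_right)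
  next
    fix x a assume "(x, a) \<in> G'"
    then obtain x' a' t where
      x: "x = x' + t *\<^sub>R x1" "a = a' + t * c" "(x',a') \<in> G"
      unfolding G'_def by blast
    show "a \<le> norm x" using dom[OF x(3), where t=t] x by simp
  qed
  moreover have "G \<subseteq> G'"
  proof
    fix p assume "p \<in> G"
    obtain y a where p: "p = (y,a)" by (cases p)
    have "(y + 0 *\<^sub>R x1, a + 0 * c) \<in> G'" unfolding G'_def using \<open>p \<in> G\<close> p by blast
    then show "p \<in> G'" using p by simp
  qed
  moreover have "(0 + 1 *\<^sub>R x1, 0 + 1 * c) \<in> G'" unfolding G'_def using hbG_0[OF G] by blast
  then have "(x1, c) \<in> G'" by simp
  then have "G' \<noteq> G" using x1 by force
  ultimately show ?thesis by blast
qed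

lemma hbG_chain:
  assumes C: "C \<in> chains {G. hbG v G}" and ne: "C \<noteq> {}"
  shows "hbG v (\<Union>C)"
proof -
  have CG: "\<And>G. G \<in> C \<Longrightarrow> hbG v G" using chainsD2[OF C] by blast
  have cmp: "\<And>G H. G \<in> C \<Longrightarrow> H \<in> C \<Longrightarrow> G \<subseteq> H \<or> H \<subseteq> G" using chainsD[OF C] by blast
  show ?thesis
    unfolding hbG_def
  proof (intro conjI allI impI)
    obtain G0 where "G0 \<in> C" using ne by blast
    then show "(v, norm v) \<in> \<Union> C" using hbG_v[OF CG] by blast
  next
    fix x a y b assume "(x, a) \<in> \<Union> C" "(y, b) \<in> \<Union> C"
    then obtain G H where GH: "G \<in> C" "H \<in> C" "(x,a) \<in> G" "(y,b) \<in> H" by blast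
    show "(x + y, a + b) \<in> \<Union> C"
      using cmp[OF GH(1,2)]
    proof
      assume "G \<subseteq> H"
      then show ?thesis using hbG_add[OF CG[OF GH(2)]] GH by blast
    next
      assume "H \<subseteq> G"
      then show ?thesis using hbG_add[OF CG[OF GH(1)]] GH by blast
    qed
  next
    fix x a r assume "(x, a) \<in> \<Union> C"
    then show "(r *\<^sub>R x, r * a) \<in> \<Union> C" using hbG_scale CG by blast
  next
    fix x a assume "(x, a) \<in> \<Union> C"
    then show "a \<le> norm x" using hbG_le CG by blast
  qed
qed

theorem hahn_banach_norm:
  fixes v :: "'a::real_normed_vector"
  shows "\<exists>\<phi>. (\<forall>x y. \<phi> (x + y) = \<phi> x + \<phi> y) \<and> (\<forall>r x. \<phi> (r *\<^sub>R x) = r * \<phi> x)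
             \<and> (\<forall>x. \<bar>\<phi> x\<bar> \<le> norm x) \<and> \<phi> v = norm v"
proof -
  define G0 where "G0 = {(r *\<^sub>R v, r * norm v) | r. True}"
  have hG0: "hbG v G0"
    unfolding hbG_def G0_def
  proof (intro conjI allI impI)
    show "(v, norm v) \<in> {(r *\<^sub>R v, r * norm v) |r. True}" by (auto intro!: exI[of _ 1])
  next
    fix x a y b assume "(x, a) \<in> {(r *\<^sub>R v, r * norm v) |r. True}" "(y, b) \<in> {(r *\<^sub>R v, r * norm v) |r. True}"
    then obtain r1 r2 where "x = r1 *\<^sub>R v" "a = r1 * norm v" "y = r2 *\<^sub>R v" "b = r2 * norm v" by blast
    then show "(x + y, a + b) \<in> {(r *\<^sub>R v, r * norm v) |r. True}"
      by (auto intro!: exI[of _ "r1 + r2"] simp: scaleR_add_left algebra_simps)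
  next
    fix x a r assume "(x, a) \<in> {(r *\<^sub>R v, r * norm v) |r. True}"
    then obtain r1 where "x = r1 *\<^sub>R v" "a = r1 * norm v" by blast
    then show "(r *\<^sub>R x, r * a) \<in> {(r *\<^sub>R v, r * norm v) |r. True}"
      by (auto intro!: exI[of _ "r * r1"])
  next
    fix x a assume "(x, a) \<in> {(r *\<^sub>R v, r * norm v) |r. True}"
    then obtain r where "x = r *\<^sub>R v" "a = r * norm v" by blast
    then show "a \<le> norm x" by (simp add: mult_right_mono)
  qed
  have "\<forall>C\<in>chains {G. hbG v G}. \<exists>U\<in>{G. hbG v G}. \<forall>X\<in>C. X \<subseteq> U"
  proof
    fix C assume C: "C \<in> chains {G. hbG v G}"
    show "\<exists>U\<in>{G. hbG v G}. \<forall>X\<in>C. X \<subseteq> U"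
    proof (cases "C = {}")
      case True then show ?thesis using hG0 by blast
    next
      case False then show ?thesis using hbG_chain[OF C False] by blast
    qed
  qed
  from Zorn_Lemma2[OF this] obtain G where G: "hbG v G"
    and max: "\<forall>X\<in>{G. hbG v G}. G \<subseteq> X \<longrightarrow> X = G" by blast
  have all: "x \<in> fst ` G" for x
  proof (rule ccontr)
    assume "x \<notin> fst ` G"
    from hbG_extend[OF G this] max show False by blast
  qed
  define \<phi> where "\<phi> x = (SOME a. (x,a) \<in> G)" for x
  have inG: "(x, \<phi> x) \<in> G" for x
  proof -
    obtain a where "(x,a) \<in> G" using all[of x] by force
    then show ?thesis unfolding \<phi>_def by (rule someI)
  qed
  have val: "(x,a) \<in> G \<Longrightarrow> \<phi> x = a" for x a
    using hbG_func[OF G inG] by blast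
  show ?thesis
  proof (intro exI[of _ \<phi>] conjI allI)
    fix x y show "\<phi> (x + y) = \<phi> x + \<phi> y" using val[OF hbG_add[OF G inG inG]] .
  next
    fix r x show "\<phi> (r *\<^sub>R x) = r * \<phi> x" using val[OF hbG_scale[OF G inG]] .
  next
    fix x
    have "\<phi> x \<le> norm x" using hbG_le[OF G inG] .
    moreover have "\<phi> ((-1) *\<^sub>R x) = - \<phi> x" using val[OF hbG_scale[OF G inG, where x=x and r="-1"]] by simp
    then have "- \<phi> x \<le> norm x" using hbG_le[OF G inG, of "(-1) *\<^sub>R x"] by simp
    ultimately show "\<bar>\<phi> x\<bar> \<le> norm x" by simp
  next
    show "\<phi> v = norm v" using val[OF hbG_v[OF G]] .
  qed
qed


context cstr begin

lemma norm_j_mult: "norm (j * x) = norm x"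
  using jnorm[where a=0 and b=1 and x=x] by (simp add: complex_norm)

definition cfun :: "('a \<Rightarrow> complex) \<Rightarrow> bool" where
  "cfun \<psi> \<longleftrightarrow> (\<forall>x y. \<psi> (x + y) = \<psi> x + \<psi> y) \<and> (\<forall>z x. \<psi> (cx z * x) = z * \<psi> x)
     \<and> (\<forall>x. cmod (\<psi> x) \<le> 2 * norm x)"

lemma exists_cfun:
  assumes "v \<noteq> 0" shows "\<exists>\<psi>. cfun \<psi> \<and> \<psi> v \<noteq> 0"
proof -
  obtain \<phi> :: "'a \<Rightarrow> real" where add: "\<And>x y. \<phi> (x + y) = \<phi> x + \<phi> y"
    and sc: "\<And>r x. \<phi> (r *\<^sub>R x) = r * \<phi> x" and bd: "\<And>x. \<bar>\<phi> x\<bar> \<le> norm x"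
    and pv: "\<phi> v = norm v"
    using hahn_banach_norm[of v] by blast
  define \<psi> where "\<psi> x = Complex (\<phi> x) (- \<phi> (j * x))" for x
  have "cfun \<psi>"
    unfolding cfun_def
  proof (intro conjI allI)
    fix x y show "\<psi> (x + y) = \<psi> x + \<psi> y"
      by (simp add: \<psi>_def add distrib_left complex_eq_iff)
  next
    fix z x
    have e1: "\<phi> (cx z * x) = Re z * \<phi> x + Im z * \<phi> (j * x)"
      by (simp add: cx_mult_eq add sc)
    have "j * (cx z * x) = Re z *\<^sub>R (j * x) + (- Im z) *\<^sub>R x"
      by (simp add: cx_mult_eq distrib_left mult.assoc[symmetric] jj)
    have sub: "\<phi> (p - q) = \<phi> p - \<phi> q" for p q
      using add[of p "(-1) *\<^sub>R q"] sc[of "-1" q] by simp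
    have "j * (cx z * x) = Re z *\<^sub>R (j * x) - Im z *\<^sub>R x"
      using \<open>j * (cx z * x) = Re z *\<^sub>R (j * x) + (- Im z) *\<^sub>R x\<close> by simp
    then have e2: "\<phi> (j * (cx z * x)) = Re z * \<phi> (j * x) - Im z * \<phi> x"
      by (simp add: sub sc)
    show "\<psi> (cx z * x) = z * \<psi> x"
      unfolding \<psi>_def e1 e2 by (simp add: complex_eq_iff algebra_simps)
  next
    fix x
    have "cmod (\<psi> x) \<le> \<bar>\<phi> x\<bar> + \<bar>\<phi> (j * x)\<bar>"
      using cmod_le[of "\<psi> x"] by (simp add: \<psi>_def)
    also have "\<dots> \<le> norm x + norm x" using bd[of x] bd[of "j * x"] norm_j_mult[of x] by simp
    finally show "cmod (\<psi> x) \<le> 2 * norm x" by simp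
  qed
  moreover have "\<psi> v \<noteq> 0" using assms pv by (simp add: \<psi>_def complex_eq_iff)
  ultimately show ?thesis by blast
qed

lemma cfun_add: "cfun \<psi> \<Longrightarrow> \<psi> (x + y) = \<psi> x + \<psi> y" unfolding cfun_def by blast
lemma cfun_cx: "cfun \<psi> \<Longrightarrow> \<psi> (cx z * x) = z * \<psi> x" unfolding cfun_def by blast
lemma cfun_bound: "cfun \<psi> \<Longrightarrow> cmod (\<psi> x) \<le> 2 * norm x" unfolding cfun_def by blast
lemma cfun_0: "cfun \<psi> \<Longrightarrow> \<psi> 0 = 0" using cfun_cx[of \<psi> 0 0] by simp
lemma cfun_minus: "cfun \<psi> \<Longrightarrow> \<psi> (- x) = - \<psi> x"
  using cfun_cx[of \<psi> "-1" x] by (simp add: cx_minus)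
lemma cfun_diff: "cfun \<psi> \<Longrightarrow> \<psi> (x - y) = \<psi> x - \<psi> y"
  using cfun_add[of \<psi> x "- y"] cfun_minus[of \<psi> y] by simp
lemma cfun_bounded_linear: "cfun \<psi> \<Longrightarrow> bounded_linear \<psi>"
proof (rule bounded_linear_intro[where K=2])
  assume c: "cfun \<psi>"
  show "\<psi> (x + y) = \<psi> x + \<psi> y" for x y using cfun_add[OF c] .
  show "\<psi> (r *\<^sub>R x) = r *\<^sub>R \<psi> x" for r x
    using cfun_cx[OF c, of "of_real r" x] by (simp add: scaleR_conv_of_real)
  show "norm (\<psi> x) \<le> norm x * 2" for x using cfun_bound[OF c, of x] by (simp add: mult.commute)
qed
lemma cfun_tendsto: "cfun \<psi> \<Longrightarrow> (f \<longlongrightarrow> l) F \<Longrightarrow> ((\<lambda>t. \<psi> (f t)) \<longlongrightarrow> \<psi> l) F"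
  using bounded_linear.tendsto[OF cfun_bounded_linear] by blast

definition isu :: "'a \<Rightarrow> bool" where "isu x \<longleftrightarrow> (\<exists>y. x * y = 1)"

definition inv :: "'a \<Rightarrow> 'a" where "inv x = (SOME y. x * y = 1)"

lemma inv_right: "isu x \<Longrightarrow> x * inv x = 1"
  unfolding inv_def isu_def by (rule someI_ex)

lemma inv_left: "isu x \<Longrightarrow> inv x * x = 1"
  using inv_right by (simp add: mult.commute)

lemma inv_unique: assumes "x * y = 1" shows "inv x = y"
proof -
  have u: "isu x" using assms unfolding isu_def by blast
  have "inv x = inv x * (x * y)" using assms by simp
  also have "\<dots> = y" using inv_left[OF u] by (simp add: mult.assoc[symmetric])
  finally show ?thesis .
qed

lemma inv_1[simp]: "inv 1 = 1" using inv_unique[of 1 1] by simp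

section \<open>Resolvent-type families\<close>

lemma res_identity:
  assumes U: "\<And>s. isu (A - cx s * B)"
  shows "inv (A - cx t * B) - inv (A - cx s * B) = cx (t - s) * (inv (A - cx t * B) * B * inv (A - cx s * B))"
proof -
  let ?Rt = "inv (A - cx t * B)" and ?Rs = "inv (A - cx s * B)"
  have "?Rt - ?Rs = ?Rt * (A - cx s * B) * ?Rs - ?Rt * (A - cx t * B) * ?Rs"
    using inv_right[OF U] inv_left[OF U]
    by (simp add: mult.assoc)
  also have "\<dots> = ?Rt * ((cx t - cx s) * B) * ?Rs"
    by (simp add: algebra_simps)
  finally show ?thesis by (simp add: cx_diff algebra_simps)
qed

lemma rt_bound:
  fixes Rt Rs d :: "'b::real_normed_vector" and t s :: complex and m :: real
  assumes m0: "m \<ge> 0" and d: "dist t s < 1 / (2 * (m + 1))"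
  and nb: "norm (Rt - Rs) \<le> cmod (t - s) * (norm Rt * m)"
  shows "norm (Rt - Rs) \<le> cmod (t - s) * (2 * norm Rs * m)"
  proof -
    have d': "cmod (t - s) * m \<le> 1/2"
    proof -
      have "cmod (t - s) * m \<le> cmod (t - s) * (m + 1)" by (simp add: mult_left_mono)
      also have "\<dots> \<le> 1 / (2 * (m + 1)) * (m + 1)"
        using d m0 by (intro mult_right_mono) (auto simp: dist_norm)
      also have "\<dots> = 1/2" using m0 by simp
      finally show ?thesis .
    qed
    have "norm (Rt) \<le> norm (Rs) + norm (Rt - Rs)"
      by (rule norm_triangle_sub)
    also have "\<dots> \<le> norm (Rs) + cmod (t - s) * (norm (Rt) * m)" using nb by simp
    also have "\<dots> = norm (Rs) + (cmod (t - s) * m) * norm (Rt)" by (simp add: algebra_simps)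
    also have "\<dots> \<le> norm (Rs) + 1/2 * norm (Rt)"
      using d' by (intro add_left_mono mult_right_mono) auto
    finally have "norm (Rt) \<le> 2 * norm (Rs)" by simp
    then have "norm (Rt) * m \<le> 2 * norm (Rs) * m" using m0 by (simp add: mult_right_mono)
    then have "cmod (t - s) * (norm (Rt) * m) \<le> cmod (t - s) * (2 * norm (Rs) * m)"
      by (simp add: mult_left_mono)
    then show ?thesis using nb by linarith
  qed

lemma rt_nb:
  fixes Rt Rs B :: 'a and t s :: complex and m :: real
  assumes idn: "Rt - Rs = cx (t - s) * (Rt * B * Rs)" and m_def: "m = norm B * norm Rs"
  shows "norm (Rt - Rs) \<le> cmod (t - s) * (norm (Rt) * m)"
  proof -
    have "norm (Rt - Rs) = cmod (t - s) * norm (Rt * B * Rs)"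
      using idn norm_cx_mult by simp
    also have "norm (Rt * B * Rs) \<le> norm (Rt) * m"
    proof -
      have "norm (Rt * B * Rs) \<le> norm (Rt * B) * norm (Rs)" by (rule norm_mult_ineq)
      also have "\<dots> \<le> norm (Rt) * norm B * norm (Rs)"
        by (intro mult_right_mono norm_mult_ineq) simp
      finally show ?thesis unfolding m_def by (simp add: mult.assoc)
    qed
    then have "cmod (t - s) * norm (Rt * B * Rs) \<le> cmod (t - s) * (norm (Rt) * m)"
      by (simp add: mult_left_mono)
    finally show ?thesis .
  qed

lemma rt_lim:
  fixes R :: "complex \<Rightarrow> 'a" and m :: real
  assumes ev: "\<forall>\<^sub>F t in at s. dist t s < 1 / (2 * (m + 1))"
  and bound: "\<And>t. dist t s < 1 / (2 * (m + 1)) \<Longrightarrow> norm (R t - R s) \<le> cmod (t - s) * (2 * norm (R s) * m)"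
  shows "(R \<longlongrightarrow> R s) (at s)"
proof -
  have "((\<lambda>t. R t - R s) \<longlongrightarrow> 0) (at s)"
  proof (rule Lim_null_comparison)
    show "\<forall>\<^sub>F t in at s. norm (R t - R s) \<le> cmod (t - s) * (2 * norm (R s) * m)"
      using ev by eventually_elim (rule bound)
    have "((\<lambda>t. cmod (t - s)) \<longlongrightarrow> cmod (s - s)) (at s)"
      by (intro tendsto_intros)
    then have "((\<lambda>t. cmod (t - s)) \<longlongrightarrow> 0) (at s)" by simp
    then show "((\<lambda>t. cmod (t - s) * (2 * norm (R s) * m)) \<longlongrightarrow> 0) (at s)"
      by (rule tendsto_mult_left_zero)
  qed
  then have "((\<lambda>t. R t - R s + R s) \<longlongrightarrow> 0 + R s) (at s)"
    by (intro tendsto_add tendsto_const)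
  then show ?thesis by simp
qed
lemma rt_ev: "m \<ge> 0 \<Longrightarrow> \<forall>\<^sub>F t in at s. dist t s < 1 / (2 * (m + 1))"
    unfolding eventually_at by (auto intro!: exI[of _ "1 / (2 * (m + 1))"])

lemma res_tendsto:
  assumes U: "\<And>s. isu (A - cx s * B)"
  shows "((\<lambda>t. inv (A - cx t * B)) \<longlongrightarrow> inv (A - cx s * B)) (at s)"
proof -
  define R where "R t = inv (A - cx t * B)" for t
  define m where "m = norm B * norm (R s)"
  have m0: "m \<ge> 0" by (simp add: m_def)
  have idn: "R t - R s = cx (t - s) * (R t * B * R s)" for t
    unfolding R_def by (rule res_identity[OF U])
  have nb: "norm (R t - R s) \<le> cmod (t - s) * (norm (R t) * m)" for t
    by (rule rt_nb[OF idn m_def])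
  have "(R \<longlongrightarrow> R s) (at s)"
    by (rule rt_lim[OF rt_ev[OF m0] rt_bound[OF m0 _ nb]])
  then show ?thesis unfolding R_def .
qed

lemma res_deriv:
  assumes U: "\<And>s. isu (A - cx s * B)" and c: "cfun \<psi>"
  shows "((\<lambda>t. \<psi> (P * inv (A - cx t * B))) has_field_derivative
            \<psi> (P * inv (A - cx s * B) * B * inv (A - cx s * B))) (at s)"
proof -
  define R where "R t = inv (A - cx t * B)" for t
  have idn: "R t - R s = cx (t - s) * (R t * B * R s)" for t
    using res_identity[OF U] by (simp add: R_def)
  have q: "(\<psi> (P * R t) - \<psi> (P * R s)) / (t - s) = \<psi> (P * R t * B * R s)" if "t \<noteq> s" for t
  proof -
    have "\<psi> (P * R t) - \<psi> (P * R s) = \<psi> (P * (R t - R s))"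
      by (simp add: cfun_diff[OF c] right_diff_distrib)
    also have "\<dots> = \<psi> (cx (t - s) * (P * R t * B * R s))"
      by (simp add: idn algebra_simps)
    also have "\<dots> = (t - s) * \<psi> (P * R t * B * R s)" using cfun_cx[OF c] by simp
    finally show ?thesis using that by simp
  qed
  have lim: "((\<lambda>t. \<psi> (P * R t * B * R s)) \<longlongrightarrow> \<psi> (P * R s * B * R s)) (at s)"
    using res_tendsto[OF U, of s] unfolding R_def[symmetric]
    by (intro cfun_tendsto[OF c] tendsto_intros) auto
  have "((\<lambda>t. (\<psi> (P * R t) - \<psi> (P * R s)) / (t - s)) \<longlongrightarrow> \<psi> (P * R s * B * R s)) (at s)"
  proof (rule Lim_transform_eventually[OF lim])
    show "\<forall>\<^sub>F t in at s. \<psi> (P * R t * B * R s) = (\<psi> (P * R t) - \<psi> (P * R s)) / (t - s)"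
      unfolding eventually_at by (auto intro!: exI[of _ 1] q[symmetric])
  qed
  then show ?thesis unfolding has_field_derivative_iff R_def .
qed

lemma res_holo:
  assumes U: "\<And>s. isu (A - cx s * B)" and c: "cfun \<psi>"
  shows "(\<lambda>t. \<psi> (P * inv (A - cx t * B))) holomorphic_on S"
  unfolding holomorphic_on_def field_differentiable_def
  by (intro ballI exI) (rule has_field_derivative_at_within[OF res_deriv[OF U c]])

end

locale lstr = cstr j for j :: "'a::{real_normed_algebra_1, banach, comm_ring_1}" +
  fixes M :: "'a set"
  assumes maxM: "maximal_ideal M"
    and uniqM: "\<And>M'. maximal_ideal M' \<Longrightarrow> M' = M"
begin

lemma idM: "ring_ideal M" using maxM unfolding maximal_ideal_def by blast

lemma M_add: "x \<in> M \<Longrightarrow> y \<in> M \<Longrightarrow> x + y \<in> M"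
  using idM unfolding ring_ideal_def by blast
lemma M_mult: "x \<in> M \<Longrightarrow> a * x \<in> M"
  using idM unfolding ring_ideal_def by blast
lemma M_minus: "x \<in> M \<Longrightarrow> - x \<in> M"
  using idM unfolding ring_ideal_def by blast

lemma ideal_one: "ring_ideal I \<Longrightarrow> 1 \<in> I \<Longrightarrow> I = UNIV"
  unfolding ring_ideal_def by (metis UNIV_eq_I mult.right_neutral)

lemma one_notin_M: "1 \<notin> M"
  using maxM ideal_one unfolding maximal_ideal_def by blast

lemma nonunit_in_M:
  assumes nu: "\<not> isu x" shows "x \<in> M"
proof -
  define A where "A = {I. ring_ideal I \<and> x \<in> I \<and> 1 \<notin> I}"
  define I0 where "I0 = {x * a | a. True}"
  have I0i: "ring_ideal I0"
    unfolding I0_def ring_ideal_def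
  proof (intro conjI ballI allI)
    show "0 \<in> {x * a |a. True}" by (auto intro!: exI[of _ 0])
  next
    fix u v assume "u \<in> {x * a |a. True}" "v \<in> {x * a |a. True}"
    then obtain a b where "u = x * a" "v = x * b" by blast
    then show "u + v \<in> {x * a |a. True}" by (auto intro!: exI[of _ "a + b"] simp: distrib_left)
  next
    fix u assume "u \<in> {x * a |a. True}"
    then obtain a where "u = x * a" by blast
    then show "- u \<in> {x * a |a. True}" by (auto intro!: exI[of _ "- a"])
  next
    fix c u assume "u \<in> {x * a |a. True}"
    then obtain a where "u = x * a" by blast
    then show "c * u \<in> {x * a |a. True}" by (auto intro!: exI[of _ "c * a"] simp: algebra_simps)
  qed
  have "x \<in> I0" unfolding I0_def by (auto intro!: exI[of _ 1])
  moreover have "1 \<notin> I0"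
  proof
    assume "1 \<in> I0"
    then obtain a where "1 = x * a" unfolding I0_def by blast
    then have "isu x" unfolding isu_def by (intro exI[of _ a]) simp
    then show False using nu by blast
  qed
  ultimately have I0A: "I0 \<in> A" using I0i unfolding A_def by blast
  have "\<forall>C\<in>chains A. \<exists>U\<in>A. \<forall>X\<in>C. X \<subseteq> U"
  proof
    fix C assume C: "C \<in> chains A"
    show "\<exists>U\<in>A. \<forall>X\<in>C. X \<subseteq> U"
    proof (cases "C = {}")
      case True then show ?thesis using I0A by blast
    next
      case False
      have CA: "\<And>I. I \<in> C \<Longrightarrow> I \<in> A" using chainsD2[OF C] by blast
      have cmp: "\<And>I J. I \<in> C \<Longrightarrow> J \<in> C \<Longrightarrow> I \<subseteq> J \<or> J \<subseteq> I" using chainsD[OF C] by blast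
      have "\<Union>C \<in> A"
        unfolding A_def ring_ideal_def
      proof (intro CollectI conjI ballI allI)
        obtain I where I: "I \<in> C" using False by blast
        then show "0 \<in> \<Union>C" "x \<in> \<Union>C" using CA[OF I] unfolding A_def ring_ideal_def by blast+
        show "1 \<notin> \<Union>C" using CA unfolding A_def by blast
      next
        fix u v assume "u \<in> \<Union>C" "v \<in> \<Union>C"
        then obtain I J where IJ: "I \<in> C" "J \<in> C" "u \<in> I" "v \<in> J" by blast
        from cmp[OF IJ(1,2)] show "u + v \<in> \<Union>C"
        proof
          assume "I \<subseteq> J" then show ?thesis using CA[OF IJ(2)] IJ unfolding A_def ring_ideal_def by blast
        next
          assume "J \<subseteq> I" then show ?thesis using CA[OF IJ(1)] IJ unfolding A_def ring_ideal_def by blast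
        qed
      next
        fix u assume "u \<in> \<Union>C"
        then show "- u \<in> \<Union>C" using CA unfolding A_def ring_ideal_def by blast
      next
        fix c u assume "u \<in> \<Union>C"
        then show "c * u \<in> \<Union>C" using CA unfolding A_def ring_ideal_def by blast
      qed
      then show ?thesis by blast
    qed
  qed
  from Zorn_Lemma2[OF this] obtain I where IA: "I \<in> A" and max: "\<forall>X\<in>A. I \<subseteq> X \<longrightarrow> X = I" by blast
  have "maximal_ideal I"
    unfolding maximal_ideal_def
  proof (intro conjI allI impI)
    show "ring_ideal I" using IA unfolding A_def by blast
    show "I \<noteq> UNIV" using IA unfolding A_def by blast
  next
    fix J assume J: "ring_ideal J \<and> I \<subseteq> J \<and> J \<noteq> UNIV"
    then have "J \<in> A" using IA ideal_one unfolding A_def by blast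
    then show "J = I" using max J by blast
  qed
  then have "I = M" by (rule uniqM)
  then show ?thesis using IA unfolding A_def by blast
qed

lemma M_unit: assumes "u \<in> M" shows "isu (1 - cx s * u)"
proof (rule ccontr)
  assume "\<not> isu (1 - cx s * u)"
  then have "1 - cx s * u \<in> M" by (rule nonunit_in_M)
  moreover have "cx s * u \<in> M" using M_mult[OF assms] .
  ultimately have "(1 - cx s * u) + cx s * u \<in> M" by (rule M_add)
  then show False using one_notin_M by simp
qed

end

fun ub :: "'a::comm_ring_1 \<Rightarrow> nat \<Rightarrow> 'a" where
  "ub y 0 = 1"
| "ub y (Suc 0) = 2 * y"
| "ub y (Suc (Suc n)) = 2 * y * ub y (Suc n) - ub y n"

lemma ub_partial:
  fixes y w :: "'a::comm_ring_1"
  shows "(1 - 2 * y * w + w^2) * (\<Sum>n<Suc m. ub y n * w^n)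
        = 1 - ub y (Suc m) * w^(Suc m) + ub y m * w^(Suc (Suc m))"
proof (induction m)
  case 0 then show ?case by (simp add: algebra_simps power2_eq_square)
next
  case (Suc m)
  have "(1 - 2 * y * w + w^2) * (\<Sum>n<Suc (Suc m). ub y n * w^n)
      = (1 - 2 * y * w + w^2) * (\<Sum>n<Suc m. ub y n * w^n) + (1 - 2 * y * w + w^2) * (ub y (Suc m) * w^(Suc m))"
    by (simp add: distrib_left)
  also have "\<dots> = 1 - ub y (Suc m) * w^(Suc m) + ub y m * w^(Suc (Suc m)) + (1 - 2 * y * w + w^2) * (ub y (Suc m) * w^(Suc m))"
    using Suc by simp
  also have "\<dots> = 1 - ub y (Suc (Suc m)) * w^(Suc (Suc m)) + ub y (Suc m) * w^(Suc (Suc (Suc m)))"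
    by (simp add: algebra_simps power2_eq_square)
  finally show ?case .
qed

locale cseq = cstr j for j :: "'a::{real_normed_algebra_1, banach, comm_ring_1}" +
  fixes a :: "nat \<Rightarrow> 'a" and y :: 'a and K :: real
  assumes a0: "a 0 = 1" and a1: "a 1 = y"
    and arec: "\<And>n. a (Suc (Suc n)) = 2 * y * a (Suc n) - a n"
    and abd: "\<And>n. norm (a n) \<le> K"
begin

definition "K' = max K 1"
lemma K'_ge: "K' \<ge> 1" "K \<le> K'" by (auto simp: K'_def)

lemma ub_rel: "ub y (Suc (Suc n)) = ub y n + 2 * a (Suc (Suc n))"
proof -
  have "ub y (Suc (Suc n)) = ub y n + 2 * a (Suc (Suc n)) \<and>
        ub y (Suc (Suc (Suc n))) = ub y (Suc n) + 2 * a (Suc (Suc (Suc n)))"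
  proof (induction n)
    case 0
    have a2: "a (Suc (Suc 0)) = 2 * y * y - 1" using arec[of 0] a0 a1 by simp
    have a3: "a (Suc (Suc (Suc 0))) = 2 * y * (2 * y * y - 1) - y" using arec[of 1] a1 a2 by simp
    show ?case by (simp add: a2 a3 algebra_simps)
  next
    case (Suc n)
    have h1: "ub y (Suc (Suc n)) = ub y n + 2 * a (Suc (Suc n))"
      and h2: "ub y (Suc (Suc (Suc n))) = ub y (Suc n) + 2 * a (Suc (Suc (Suc n)))"
      using Suc.IH by blast+
    have "ub y (Suc (Suc (Suc (Suc n)))) = 2 * y * ub y (Suc (Suc (Suc n))) - ub y (Suc (Suc n))"
      by (simp only: ub.simps)
    also have "\<dots> = 2 * y * (ub y (Suc n) + 2 * a (Suc (Suc (Suc n)))) - (ub y n + 2 * a (Suc (Suc n)))"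
      by (simp only: h1 h2)
    also have "\<dots> = (2 * y * ub y (Suc n) - ub y n) + 2 * (2 * y * a (Suc (Suc (Suc n))) - a (Suc (Suc n)))"
      by (simp add: algebra_simps)
    also have "\<dots> = ub y (Suc (Suc n)) + 2 * a (Suc (Suc (Suc (Suc n))))"
      by (simp only: ub.simps arec)
    finally show ?case using h2 by blast
  qed
  then show ?thesis by blast
qed

lemma ub_bound: "norm (ub y n) \<le> 2 * (real n + 1) * K'"
proof -
  have "norm (ub y n) \<le> 2 * (real n + 1) * K' \<and> norm (ub y (Suc n)) \<le> 2 * (real (Suc n) + 1) * K'"
  proof (induction n)
    case 0
    have "norm (2 * y) \<le> norm (2::'a) * norm y" by (rule norm_mult_ineq)
    also have "\<dots> \<le> 2 * K'" using abd[of 1] a1 K'_ge by simp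
    finally have "norm (2 * y) \<le> 2 * K'" .
    then show ?case using K'_ge by simp
  next
    case (Suc n)
    have n2: "norm (2 * a (Suc (Suc n))) \<le> 2 * K'"
    proof -
      have "norm (2 * a (Suc (Suc n))) \<le> norm (2::'a) * norm (a (Suc (Suc n)))" by (rule norm_mult_ineq)
      also have "\<dots> \<le> 2 * K'" using abd[of "Suc (Suc n)"] K'_ge by simp
      finally show ?thesis .
    qed
    have "norm (ub y (Suc (Suc n))) \<le> norm (ub y n) + norm (2 * a (Suc (Suc n)))"
      by (simp add: ub_rel norm_triangle_ineq del: ub.simps)
    also have "\<dots> \<le> 2 * (real n + 1) * K' + 2 * K'"
      using Suc.IH n2 by (intro add_mono) auto
    also have "\<dots> \<le> 2 * (real (Suc (Suc n)) + 1) * K'" using K'_ge by (simp add: algebra_simps)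
    finally show ?case using Suc.IH by simp
  qed
  then show ?thesis by blast
qed

lemma cheb_resolvent:
  assumes z: "cmod z < 1" and eq: "z^2 - 2 * \<zeta> * z + 1 = 0"
  shows "isu (cx \<zeta> - y) \<and> norm (inv (cx \<zeta> - y)) \<le> 4 * K' * cmod z / (1 - cmod z)^2"
proof -
  define w where "w = cx z"
  define \<rho> where "\<rho> = cmod z"
  have \<rho>: "0 \<le> \<rho>" "\<rho> < 1" using z by (auto simp: \<rho>_def)
  define f where "f n = ub y n * w^n" for n
  have nf: "norm (f n) \<le> 2 * K' * (of_nat (Suc n) * \<rho>^n)" for n
  proof -
    have "norm (f n) \<le> norm (ub y n) * norm (w^n)" unfolding f_def by (rule norm_mult_ineq)
    also have "norm (w^n) = \<rho>^n"
      unfolding w_def \<rho>_def cx_power[symmetric] by (simp add: norm_cx norm_power)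
    also have "norm (ub y n) * \<rho>^n \<le> 2 * (real n + 1) * K' * \<rho>^n"
      using ub_bound[of n] \<rho> by (simp add: mult_right_mono)
    finally show ?thesis by (simp add: algebra_simps)
  qed
  have gs: "(\<lambda>n. of_nat (Suc n) * \<rho>^n) sums (1 / (1 - \<rho>)^2)"
    using geometric_deriv_sums[of \<rho>] \<rho> by simp
  have sg: "summable (\<lambda>n. 2 * K' * (of_nat (Suc n) * \<rho>^n))"
    using gs by (intro summable_mult) (auto simp: sums_iff)
  have sf: "summable f"
    by (rule summable_comparison_test[OF _ sg]) (use nf in auto)
  define S where "S = suminf f"
  define D where "D = 1 - 2 * y * w + w^2"
  have lim1: "(\<lambda>m. D * (\<Sum>n<Suc m. f n)) \<longlonglongrightarrow> D * S"
    unfolding S_def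
    by (intro tendsto_mult_left LIMSEQ_Suc summable_LIMSEQ sf)
  have f0: "f \<longlonglongrightarrow> 0" using summable_LIMSEQ_zero[OF sf] .
  have eqm: "D * (\<Sum>n<Suc m. f n) = 1 - f (Suc m) + f m * w^2" for m
    unfolding D_def f_def using ub_partial[of y w m] by (simp add: algebra_simps power2_eq_square)
  have lim2: "(\<lambda>m. 1 - f (Suc m) + f m * w^2) \<longlonglongrightarrow> 1 - 0 + 0 * w^2"
    by (intro tendsto_intros f0 LIMSEQ_Suc)
  have DS: "D * S = 1"
    using LIMSEQ_unique[OF lim1] lim2 eqm by simp
  have Dfac: "D = (cx \<zeta> - y) * cx (2 * z)"
  proof -
    have "cx (2 * \<zeta> * z) = cx (z^2 + 1)" using eq by (simp add: algebra_simps)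
    then have "cx 2 * cx \<zeta> * cx z = cx z ^ 2 + 1" by (simp add: cx_mult cx_add cx_power)
    then show ?thesis unfolding D_def w_def by (simp add: cx_mult algebra_simps)
  qed
  have prod: "(cx \<zeta> - y) * (cx (2 * z) * S) = 1" using DS Dfac by (simp add: mult.assoc)
  then have u: "isu (cx \<zeta> - y)" unfolding isu_def by blast
  have iv: "inv (cx \<zeta> - y) = cx (2 * z) * S" using inv_unique[OF prod] .
  have nS: "norm S \<le> 2 * K' * (1 / (1 - \<rho>)^2)"
  proof -
    have "norm S \<le> suminf (\<lambda>n. 2 * K' * (of_nat (Suc n) * \<rho>^n))"
      unfolding S_def by (rule norm_suminf_le[OF nf sg])
    also have "\<dots> = 2 * K' * (1 / (1 - \<rho>)^2)"
      using gs by (simp add: suminf_mult sums_iff)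
    finally show ?thesis .
  qed
  have "norm (inv (cx \<zeta> - y)) = 2 * \<rho> * norm S"
    unfolding iv norm_cx_mult \<rho>_def by (simp add: norm_mult)
  also have "\<dots> \<le> 2 * \<rho> * (2 * K' * (1 / (1 - \<rho>)^2))"
    using nS \<rho> by (intro mult_left_mono) auto
  finally show ?thesis using u by (simp add: \<rho>_def mult_ac)
qed

end

lemma quad_root_in_disc:
  fixes \<zeta> :: complex
  assumes "\<not> (Im \<zeta> = 0 \<and> \<bar>Re \<zeta>\<bar> \<le> 1)"
  shows "\<exists>z. cmod z < 1 \<and> z^2 - 2 * \<zeta> * z + 1 = 0"
proof -
  define w where "w = csqrt (\<zeta>^2 - 1)"
  have w2: "w^2 = \<zeta>^2 - 1" unfolding w_def by simp
  define z1 where "z1 = \<zeta> - w"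
  define z2 where "z2 = \<zeta> + w"
  have r1: "z1^2 - 2 * \<zeta> * z1 + 1 = 0" unfolding z1_def using w2 by (simp add: power2_eq_square algebra_simps)
  have r2: "z2^2 - 2 * \<zeta> * z2 + 1 = 0" unfolding z2_def using w2 by (simp add: power2_eq_square algebra_simps)
  have p: "z1 * z2 = 1" unfolding z1_def z2_def using w2 by (simp add: power2_eq_square algebra_simps)
  have pc: "cmod z1 * cmod z2 = 1" using p by (metis norm_mult norm_one)
  show ?thesis
  proof (cases "cmod z1 < 1")
    case True then show ?thesis using r1 by blast
  next
    case False
    show ?thesis
    proof (cases "cmod z1 = 1")
      case True
      have "z2 = cnj z1"
      proof -
        have "z1 * cnj z1 = 1" using True by (simp add: complex_mult_cnj cmod_def power2_eq_square)
        then have "z2 = z2 * (z1 * cnj z1)" by simp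
        also have "\<dots> = (z1 * z2) * cnj z1" by (simp add: mult_ac)
        finally show ?thesis using p by simp
      qed
      then have "\<zeta> = of_real (Re z1)" using z1_def z2_def
        by (simp add: complex_eq_iff)
      moreover have "\<bar>Re z1\<bar> \<le> 1" using abs_Re_le_cmod[of z1] True by simp
      ultimately show ?thesis using assms by simp
    next
      case False2: False
      then have "cmod z1 > 1" using False by simp
      have "cmod z2 < 1"
      proof (rule ccontr)
        assume "\<not> cmod z2 < 1"
        then have "cmod z1 * 1 \<le> cmod z1 * cmod z2" by (intro mult_left_mono) auto
        then show False using pc \<open>cmod z1 > 1\<close> by simp
      qed
      then show ?thesis using r2 by blast
    qed
  qed
qed

lemma root_geom:
  fixes z \<zeta> :: complex
  assumes z: "cmod z < 1" and eq: "z^2 - 2 * \<zeta> * z + 1 = 0" and \<zeta>: "cmod \<zeta> \<le> 2"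
  shows "cmod z \<ge> 1/5" "\<bar>Im \<zeta>\<bar> * cmod z \<le> 1 - cmod z"
proof -
  have z0: "z \<noteq> 0" using eq by auto
  define \<rho> where "\<rho> = cmod z"
  have \<rho>: "0 < \<rho>" "\<rho> < 1" using z z0 by (auto simp: \<rho>_def)
  have e: "2 * \<zeta> = z + inverse z"
    using eq z0 by (simp add: field_simps power2_eq_square)
  have "1/\<rho> - \<rho> \<le> cmod (z + inverse z)"
  proof -
    have "cmod (inverse z) - cmod z \<le> cmod (inverse z + z)" by (rule norm_diff_ineq)
    then show ?thesis by (simp add: \<rho>_def norm_inverse divide_inverse add.commute)
  qed
  also have "\<dots> = 2 * cmod \<zeta>" using e[symmetric] by (simp add: norm_mult)
  also have "\<dots> \<le> 4" using \<zeta> by simp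
  finally have "1/\<rho> \<le> 4 + \<rho>" by simp
  then have "1 \<le> (4 + \<rho>) * \<rho>" using \<rho> by (simp add: field_simps)
  moreover have "(4 + \<rho>) * \<rho> \<le> 5 * \<rho>" using \<rho> by (intro mult_right_mono) auto
  ultimately show "cmod z \<ge> 1/5" unfolding \<rho>_def by simp
  have "2 * Im \<zeta> = Im z - Im z / \<rho>^2"
    using arg_cong[OF e, of Im] by (simp add: \<rho>_def cmod_def power2_eq_square divide_inverse)
  then have "2 * Im \<zeta> * \<rho>^2 = Im z * (\<rho>^2 - 1)" using \<rho> by (simp add: field_simps)
  then have "\<bar>2 * Im \<zeta> * \<rho>^2\<bar> = \<bar>Im z * (\<rho>^2 - 1)\<bar>" by simp
  moreover have "\<rho>^2 \<le> 1" using \<rho> by (simp add: power_le_one)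
  ultimately have "2 * \<bar>Im \<zeta>\<bar> * \<rho>^2 = \<bar>Im z\<bar> * (1 - \<rho>^2)"
    by (simp add: abs_mult abs_of_nonpos)
  also have "\<dots> \<le> \<rho> * (1 - \<rho>^2)" using \<rho> abs_Im_le_cmod[of z]
    by (intro mult_right_mono) (auto simp: \<rho>_def power_le_one)
  finally have "\<rho> * (2 * \<bar>Im \<zeta>\<bar> * \<rho>) \<le> \<rho> * (1 - \<rho>^2)" by (simp add: power2_eq_square mult_ac)
  then have "2 * \<bar>Im \<zeta>\<bar> * \<rho> \<le> 1 - \<rho>^2" by (rule mult_left_le_imp_le) (use \<rho> in simp)
  also have "\<dots> \<le> 2 * (1 - \<rho>)"
  proof -
    have "1 - \<rho>^2 = (1 + \<rho>) * (1 - \<rho>)" by (simp add: power2_eq_square algebra_simps)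
    also have "\<dots> \<le> 2 * (1 - \<rho>)" using \<rho> by (intro mult_right_mono) auto
    finally show ?thesis .
  qed
  finally show "\<bar>Im \<zeta>\<bar> * cmod z \<le> 1 - cmod z" unfolding \<rho>_def by simp
qed


context cstr begin

lemma isu_neg: "isu x \<Longrightarrow> isu (- x)"
  unfolding isu_def by (metis minus_mult_minus)

lemma gelfand_mazur: "\<exists>l. \<not> isu (y - cx l)"
proof (rule ccontr)
  assume "\<not> (\<exists>l. \<not> isu (y - cx l))"
  then have U: "\<And>s. isu (y - cx s * 1)" by simp
  define v where "v = inv (y - cx 0 * 1)"
  have "(y - cx 0 * 1) * v = 1" unfolding v_def by (rule inv_right[OF U])
  then have "v \<noteq> 0" by auto
  then obtain \<psi> where c: "cfun \<psi>" and pv: "\<psi> v \<noteq> 0" using exists_cfun by blast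
  define F where "F s = \<psi> (1 * inv (y - cx s * 1))" for s
  have hol: "F holomorphic_on UNIV" unfolding F_def by (rule res_holo[OF U c])
  have nb: "norm (inv (y - cx s * 1)) * (cmod s - norm y) \<le> 1" for s
  proof -
    define e where "e = inv (y - cx s * 1)"
    have "(y - cx s) * e = 1" unfolding e_def using inv_right[OF U, of s] by simp
    then have eq: "cx s * e = y * e - 1" by (simp add: algebra_simps)
    have "cmod s * norm e = norm (cx s * e)" by (simp only: norm_cx_mult)
    also have "\<dots> = norm (y * e - 1)" by (simp only: eq)
    also have "\<dots> \<le> norm (y * e) + norm (1::'a)" by (rule norm_triangle_ineq4)
    also have "\<dots> \<le> norm y * norm e + 1" using norm_mult_ineq[of y e] by simp
    finally show ?thesis unfolding e_def by (simp add: algebra_simps)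
  qed
  have lim: "(F \<longlongrightarrow> 0) at_infinity"
    unfolding tendsto_iff eventually_at_infinity
  proof (intro allI impI)
    fix \<epsilon> :: real assume \<epsilon>: "\<epsilon> > 0"
    show "\<exists>b. \<forall>s. b \<le> norm s \<longrightarrow> dist (F s) 0 < \<epsilon>"
    proof (intro exI allI impI)
      fix s :: complex assume b: "norm y + 2 / \<epsilon> + 1 \<le> norm s"
      define e where "e = inv (y - cx s * 1)"
      have pos: "cmod s - norm y > 2 / \<epsilon>" using b by simp
      have e1: "norm e * (cmod s - norm y) \<le> 1" using nb[of s] unfolding e_def .
      have "norm e * (2 / \<epsilon>) \<le> norm e * (cmod s - norm y)"
        using pos by (intro mult_left_mono) auto
      then have "norm e * (2 / \<epsilon>) \<le> 1" using e1 by linarith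
      then have ne: "norm e \<le> \<epsilon> / 2" using \<epsilon> by (simp add: field_simps)
      have "cmod (F s) \<le> 2 * norm e" unfolding F_def e_def using cfun_bound[OF c] by simp
      also have "\<dots> \<le> \<epsilon>" using ne by simp
      finally have "cmod (F s) \<le> \<epsilon>" .
      moreover have "cmod (F s) \<noteq> \<epsilon>"
      proof
        assume eq: "cmod (F s) = \<epsilon>"
        then have "norm e = \<epsilon> / 2"
          using \<open>cmod (F s) \<le> 2 * norm e\<close> ne by linarith
        then have "\<epsilon> / 2 * (2 / \<epsilon>) \<le> 1" using \<open>norm e * (2 / \<epsilon>) \<le> 1\<close> by simp
        moreover have "norm e * (2 / \<epsilon>) < norm e * (cmod s - norm y)"
          using pos \<open>norm e = \<epsilon> / 2\<close> \<epsilon> by (intro mult_strict_left_mono) auto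
        ultimately show False using e1 \<open>norm e = \<epsilon> / 2\<close> \<epsilon> by simp
      qed
      ultimately show "dist (F s) 0 < \<epsilon>" by simp
    qed
  qed
  have "F 0 = 0" using Liouville_weak[OF hol lim] .
  then show False using pv unfolding F_def v_def by simp
qed

end

context lstr begin

lemma quasinil_square:
  assumes uM: "u \<in> M"
    and bound: "\<And>s r. 1 \<le> r \<Longrightarrow> cmod s = r \<Longrightarrow> Im s \<noteq> 0 \<Longrightarrow>
                  norm (inv (1 - cx s * u)) * (Im s)^2 \<le> Q * r^3"
    and c: "cfun \<psi>"
  shows "\<psi> (u * u) = 0"
proof -
  have U: "\<And>s. isu (1 - cx s * u)" using M_unit[OF uM] .
  define R where "R s = inv (1 - cx s * u)" for s
  define g where "g s = \<psi> (u * u * R s)" for s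
  have gh: "g holomorphic_on UNIV" unfolding g_def R_def by (rule res_holo[OF U c])
  have Rid: "cx s ^ 2 * (u * u * R s) = R s - 1 - cx s * u" for s
  proof -
    have e: "(1 - cx s * u) * R s = 1" unfolding R_def by (rule inv_right[OF U])
    then have r1: "R s = 1 + cx s * u * R s" by (simp add: algebra_simps)
    have "R s = 1 + cx s * u * (1 + cx s * u * R s)" using r1 by (metis r1)
    then have "R s = 1 + cx s * u + cx s ^ 2 * (u * u * R s)"
      by (simp add: algebra_simps power2_eq_square)
    then show ?thesis by (simp add: algebra_simps)
  qed
  have Q0: "Q \<ge> 0"
  proof -
    have "norm (inv (1 - cx \<i> * u)) * (Im \<i>)^2 \<le> Q * 1^3" by (rule bound) auto
    then have "norm (inv (1 - cx \<i> * u)) \<le> Q" by simp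
    then show ?thesis using norm_ge_zero[of "inv (1 - cx \<i> * u)"] by linarith
  qed
  define C where "C = 8 * Q + 8 + 8 * norm u"
  have main: "cmod (g 0) \<le> C / r" if r: "r \<ge> 1" for r
  proof -
    define \<Phi> where "\<Phi> s = g s * (s^2 - (complex_of_real r)^2)^2" for s
    have \<Phi>h: "\<Phi> holomorphic_on cball 0 r"
      unfolding \<Phi>_def by (intro holomorphic_intros holomorphic_on_subset[OF gh]) auto
    have ci: "((\<lambda>s. \<Phi> s / (s - 0)) has_contour_integral (2 * of_real pi * \<i> * \<Phi> 0)) (circlepath 0 r)"
      by (rule Cauchy_integral_circlepath_simple[OF \<Phi>h]) (use r in simp)
    have bd: "cmod (\<Phi> s / (s - 0)) \<le> C * r^2" if s: "norm (s - 0) = r" for s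
    proof -
      have sr: "cmod s = r" using s by simp
      have s0: "s \<noteq> 0" using sr r by auto
      have fac: "s^2 - (complex_of_real r)^2 = 2 * \<i> * complex_of_real (Im s) * s"
      proof -
        have "(Re s)^2 + (Im s)^2 = r^2" using cmod_power2[of s] sr by simp
        then show ?thesis by (simp add: complex_eq_iff power2_eq_square algebra_simps)
      qed
      have nfac: "cmod ((s^2 - (complex_of_real r)^2)^2) = 4 * (Im s)^2 * r^2"
        unfolding fac by (simp add: norm_mult norm_power sr power_mult_distrib)
      have g2: "r^2 * cmod (g s) \<le> 2 * norm (R s) + 2 + 2 * r * norm u"
      proof -
        have "s^2 * g s = \<psi> (cx s ^ 2 * (u * u * R s))"
          unfolding g_def by (simp add: cfun_cx[OF c] cx_power[symmetric])
        also have "\<dots> = \<psi> (R s) - \<psi> 1 - s * \<psi> u"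
          by (simp add: Rid cfun_diff[OF c] cfun_cx[OF c])
        finally have e3: "s^2 * g s = \<psi> (R s) - \<psi> 1 - s * \<psi> u" .
        have "cmod (s^2 * g s) \<le> cmod (\<psi> (R s) - \<psi> 1) + cmod (s * \<psi> u)"
          unfolding e3 by (rule norm_triangle_ineq4)
        also have "\<dots> \<le> cmod (\<psi> (R s)) + cmod (\<psi> 1) + cmod (s * \<psi> u)"
          using norm_triangle_ineq4[of "\<psi> (R s)" "\<psi> 1"] by simp
        finally have "cmod (s^2 * g s) \<le> cmod (\<psi> (R s)) + cmod (\<psi> 1) + cmod (s * \<psi> u)" .
        also have "\<dots> \<le> 2 * norm (R s) + 2 + r * (2 * norm u)"
          using cfun_bound[OF c, of "R s"] cfun_bound[OF c, of 1] cfun_bound[OF c, of u] sr r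
          by (intro add_mono) (auto simp: norm_mult intro: mult_left_mono)
        finally show ?thesis by (simp add: norm_mult norm_power sr algebra_simps)
      qed
      have "cmod (\<Phi> s) \<le> C * r^3"
      proof (cases "Im s = 0")
        case True
        then show ?thesis unfolding \<Phi>_def fac using C_def Q0 r by simp
      next
        case False
        have RB: "norm (R s) * (Im s)^2 \<le> Q * r^3" unfolding R_def by (rule bound[OF r sr False])
        have "\<bar>Im s\<bar> \<le> r" using abs_Im_le_cmod[of s] sr by simp
        then have "\<bar>Im s\<bar>^2 \<le> r^2" by (rule power_mono) simp
        then have ims: "(Im s)^2 \<le> r^2" by simp
        have "cmod (\<Phi> s) = cmod (g s) * (4 * (Im s)^2 * r^2)"
          unfolding \<Phi>_def by (simp add: norm_mult nfac)
        also have "\<dots> = 4 * (Im s)^2 * (r^2 * cmod (g s))" by (simp add: algebra_simps)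
        also have "\<dots> \<le> 4 * (Im s)^2 * (2 * norm (R s) + 2 + 2 * r * norm u)"
          by (intro mult_left_mono g2) auto
        also have "\<dots> = 8 * (norm (R s) * (Im s)^2) + 8 * (Im s)^2 * (1 + r * norm u)"
          by (simp add: algebra_simps)
        also have "\<dots> \<le> 8 * (Q * r^3) + 8 * r^2 * (1 + r * norm u)"
          using RB ims r by (intro add_mono mult_left_mono mult_right_mono) auto
        also have "\<dots> \<le> C * r^3"
        proof -
          have "r^2 \<le> r^3" using r by (simp add: power_increasing)
          then have "8 * r^2 * 1 \<le> 8 * r^3" by simp
          then show ?thesis unfolding C_def by (simp add: algebra_simps power2_eq_square power3_eq_cube)
        qed
        finally show ?thesis .
      qed
      then show ?thesis using sr s0 r
        by (simp add: norm_divide power2_eq_square power3_eq_cube field_simps)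
    qed
    have "cmod (2 * of_real pi * \<i> * \<Phi> 0) \<le> C * r^2 * (2 * pi * r)"
      by (rule has_contour_integral_bound_circlepath[OF ci _ _ bd]) (use r Q0 in \<open>auto simp: C_def\<close>)
    then have "2 * pi * cmod (\<Phi> 0) \<le> 2 * pi * (C * r^3)"
      by (simp add: norm_mult power3_eq_cube power2_eq_square algebra_simps)
    then have "cmod (\<Phi> 0) \<le> C * r^3" by simp
    moreover have "cmod (\<Phi> 0) = cmod (g 0) * r^4"
      unfolding \<Phi>_def by (simp add: norm_mult norm_power)
    ultimately have "cmod (g 0) * r^4 \<le> C * r^3" by simp
    moreover have "r^4 = r * r^3" by (simp add: eval_nat_numeral)
    ultimately have "(cmod (g 0) * r) * r^3 \<le> C * r^3" by (simp add: mult_ac)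
    then have "cmod (g 0) * r \<le> C" by (rule mult_right_le_imp_le) (use r in simp)
    then show ?thesis using r by (simp add: field_simps)
  qed
  have "g 0 = 0"
  proof (rule ccontr)
    assume ne: "g 0 \<noteq> 0"
    define r where "r = max 1 (2 * C / cmod (g 0))"
    have r1: "r \<ge> 1" unfolding r_def by simp
    have "cmod (g 0) \<le> C / r" using main[OF r1] .
    then have "cmod (g 0) * r \<le> C" using r1 by (simp add: field_simps)
    moreover have "cmod (g 0) * r \<ge> cmod (g 0) * (2 * C / cmod (g 0))"
      unfolding r_def by (intro mult_left_mono) auto
    then have "cmod (g 0) * r \<ge> 2 * C" using ne by simp
    moreover have "C > 0" unfolding C_def using Q0 norm_ge_zero[of u] by linarith
    moreover have "cmod (g 0) * r > 0" using ne r1 by simp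
    ultimately show False by linarith
  qed
  then show ?thesis unfolding g_def R_def by simp
qed

end

fun tt :: "real \<Rightarrow> nat \<Rightarrow> real" where
  "tt c 0 = 1" | "tt c (Suc 0) = c" | "tt c (Suc (Suc n)) = 2 * c * tt c (Suc n) - tt c n"

fun ss :: "real \<Rightarrow> nat \<Rightarrow> real" where
  "ss c 0 = 0" | "ss c (Suc 0) = 1" | "ss c (Suc (Suc n)) = 2 * c * ss c (Suc n) - ss c n"

lemma tt_ss: "tt c (Suc n) = c * ss c (Suc n) - ss c n"
proof -
  have "tt c (Suc n) = c * ss c (Suc n) - ss c n \<and> tt c (Suc (Suc n)) = c * ss c (Suc (Suc n)) - ss c (Suc n)"
  proof (induction n)
    case 0 then show ?case by (simp add: algebra_simps)
  next
    case (Suc n)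
    have h1: "tt c (Suc n) = c * ss c (Suc n) - ss c n"
      and h2: "tt c (Suc (Suc n)) = c * ss c (Suc (Suc n)) - ss c (Suc n)" using Suc.IH by blast+
    have "tt c (Suc (Suc (Suc n))) = 2 * c * tt c (Suc (Suc n)) - tt c (Suc n)" by (simp only: tt.simps)
    also have "\<dots> = c * (2 * c * ss c (Suc (Suc n)) - ss c (Suc n)) - (2 * c * ss c (Suc n) - ss c n)"
      by (simp only: h1 h2) (simp add: algebra_simps)
    also have "\<dots> = c * ss c (Suc (Suc (Suc n))) - ss c (Suc (Suc n))" by (simp only: ss.simps)
    finally show ?case using h2 by blast
  qed
  then show ?thesis by blast
qed

lemma wronsk: "ss c (Suc n) * tt c n - ss c n * tt c (Suc n) = 1"
proof (induction n)
  case 0 then show ?case by simp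
next
  case (Suc n)
  have "ss c (Suc (Suc n)) * tt c (Suc n) - ss c (Suc n) * tt c (Suc (Suc n))
      = (2 * c * ss c (Suc n) - ss c n) * tt c (Suc n) - ss c (Suc n) * (2 * c * tt c (Suc n) - tt c n)"
    by (simp only: tt.simps ss.simps)
  also have "\<dots> = ss c (Suc n) * tt c n - ss c n * tt c (Suc n)" by (simp add: algebra_simps)
  finally show ?case using Suc.IH by simp
qed

lemma cos_sum_diff: "cos (a + b) + cos (a - b) = 2 * cos a * cos (b::real)"
  by (simp add: cos_add cos_diff)

lemma tt_cos: "tt (cos \<theta>) n = cos (real n * \<theta>)"
proof -
  have "tt (cos \<theta>) n = cos (real n * \<theta>) \<and> tt (cos \<theta>) (Suc n) = cos (real (Suc n) * \<theta>)"
  proof (induction n)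
    case 0 then show ?case by simp
  next
    case (Suc n)
    have h1: "tt (cos \<theta>) n = cos (real n * \<theta>)"
      and h2: "tt (cos \<theta>) (Suc n) = cos (real (Suc n) * \<theta>)" using Suc.IH by blast+
    have "cos (real (Suc n) * \<theta> + \<theta>) + cos (real (Suc n) * \<theta> - \<theta>) = 2 * cos (real (Suc n) * \<theta>) * cos \<theta>"
      by (rule cos_sum_diff)
    moreover have "real (Suc n) * \<theta> + \<theta> = real (Suc (Suc n)) * \<theta>" by (simp add: algebra_simps)
    moreover have "real (Suc n) * \<theta> - \<theta> = real n * \<theta>" by (simp add: algebra_simps)
    ultimately have e: "cos (real (Suc (Suc n)) * \<theta>) = 2 * cos \<theta> * cos (real (Suc n) * \<theta>) - cos (real n * \<theta>)"
      by (simp add: algebra_simps)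
    show ?case using h2 by (simp only: tt.simps h1 h2 e)
  qed
  then show ?thesis by blast
qed

lemma tt_bound: assumes "\<bar>c\<bar> \<le> 1" shows "\<bar>tt c n\<bar> \<le> 1"
proof -
  have "c = cos (arccos c)" using assms by simp
  then have "tt c n = cos (real n * arccos c)" using tt_cos by metis
  then show ?thesis by simp
qed

lemma ss_lower: assumes "\<bar>c\<bar> \<le> 1" shows "1 \<le> \<bar>ss c (Suc n)\<bar> + \<bar>ss c n\<bar>"
proof -
  have "1 = ss c (Suc n) * tt c n - ss c n * tt c (Suc n)" using wronsk[of c n] by simp
  also have "\<dots> \<le> \<bar>ss c (Suc n)\<bar> * \<bar>tt c n\<bar> + \<bar>ss c n\<bar> * \<bar>tt c (Suc n)\<bar>"
    by (metis abs_ge_self abs_mult abs_minus_cancel add_mono diff_conv_add_uminus minus_mult_left)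
  also have "\<dots> \<le> \<bar>ss c (Suc n)\<bar> * 1 + \<bar>ss c n\<bar> * 1"
    using tt_bound[OF assms] by (intro add_mono mult_left_mono) auto
  finally show ?thesis by simp
qed

context cseq begin

lemma nil_finish:
  assumes yc: "y = of_real c + u" and uu: "u * u = 0" and c1: "\<bar>c\<bar> \<le> 1"
  shows "u = 0"
proof -
  have step: "2 * (of_real c + u) * (of_real t1 + of_real d1 * u) - (of_real t0 + of_real d0 * u)
     = of_real (2 * c * t1 - t0) + of_real (2 * c * d1 + 2 * t1 - d0) * u + of_real (2 * d1) * (u * u)"
    for t1 t0 d1 d0 :: real
    by (simp add: algebra_simps)
  have rep: "a n = of_real (tt c n) + of_real (real n * ss c n) * u" for n
  proof -
    have "a n = of_real (tt c n) + of_real (real n * ss c n) * u \<and>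
          a (Suc n) = of_real (tt c (Suc n)) + of_real (real (Suc n) * ss c (Suc n)) * u"
    proof (induction n)
      case 0 then show ?case using a0 a1 yc by simp
    next
      case (Suc n)
      have h1: "a n = of_real (tt c n) + of_real (real n * ss c n) * u"
        and h2: "a (Suc n) = of_real (tt c (Suc n)) + of_real (real (Suc n) * ss c (Suc n)) * u"
        using Suc.IH by blast+
      have d: "real (Suc (Suc n)) * ss c (Suc (Suc n))
            = 2 * c * (real (Suc n) * ss c (Suc n)) + 2 * tt c (Suc n) - real n * ss c n"
        unfolding tt_ss ss.simps by (simp add: algebra_simps)
      have "a (Suc (Suc n)) = 2 * (of_real c + u) * a (Suc n) - a n" using arec yc by simp
      also have "\<dots> = of_real (2 * c * tt c (Suc n) - tt c n)
          + of_real (2 * c * (real (Suc n) * ss c (Suc n)) + 2 * tt c (Suc n) - real n * ss c n) * u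
          + of_real (2 * (real (Suc n) * ss c (Suc n))) * (u * u)"
        unfolding h1 h2 by (rule step)
      also have "\<dots> = of_real (tt c (Suc (Suc n))) + of_real (real (Suc (Suc n)) * ss c (Suc (Suc n))) * u"
        using uu d by simp
      finally show ?case using h2 by blast
    qed
    then show ?thesis by blast
  qed
  have nb: "\<bar>real n * ss c n\<bar> * norm u \<le> K + 1" for n
  proof -
    have "of_real (real n * ss c n) * u = a n - of_real (tt c n)" using rep[of n] by simp
    then have "\<bar>real n * ss c n\<bar> * norm u = norm (a n - of_real (tt c n))"
      by (metis norm_scaleR scaleR_conv_of_real)
    also have "\<dots> \<le> norm (a n) + norm (of_real (tt c n) :: 'a)" by (rule norm_triangle_ineq4)
    also have "\<dots> \<le> K + 1" using abd[of n] tt_bound[OF c1, of n] by simp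
    finally show ?thesis .
  qed
  have lin: "real n * norm u \<le> 2 * (K + 1)" for n
  proof -
    have "real n * norm u * 1 \<le> real n * norm u * (\<bar>ss c (Suc n)\<bar> + \<bar>ss c n\<bar>)"
      using ss_lower[OF c1, of n] by (intro mult_left_mono) auto
    also have "\<dots> = real n * \<bar>ss c (Suc n)\<bar> * norm u + \<bar>real n * ss c n\<bar> * norm u"
      by (simp add: algebra_simps abs_mult)
    also have "real n * \<bar>ss c (Suc n)\<bar> * norm u \<le> real (Suc n) * \<bar>ss c (Suc n)\<bar> * norm u"
      by (intro mult_right_mono) auto
    also have "\<dots> = \<bar>real (Suc n) * ss c (Suc n)\<bar> * norm u" by (simp add: abs_mult)
    also have "\<dots> \<le> K + 1" by (rule nb)
    finally show ?thesis using nb[of n] by simp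
  qed
  show "u = 0"
  proof (rule ccontr)
    assume "u \<noteq> 0"
    then have "norm u > 0" by simp
    then obtain n where "2 * (K + 1) < real n * norm u" using ex_less_of_nat_mult by blast
    then show False using lin[of n] by simp
  qed
qed

end

locale mainl = lstr j M + cseq j a y K
  for j :: "'a::{real_normed_algebra_1, banach, comm_ring_1}" and M a y K
begin

lemma spec_bound:
  fixes s :: complex and r c :: real and u :: 'a
  assumes r: "1 \<le> r" and sr: "cmod s = r" and ims: "Im s \<noteq> 0"
    and c1: "\<bar>c\<bar> \<le> 1" and uy: "u = y - of_real c"
  shows "isu (1 - cx s * u) \<and> norm (inv (1 - cx s * u)) * (Im s)^2 \<le> 20 * K' * r^3"
proof -
  have s0: "s \<noteq> 0" using sr r by auto
  define \<zeta> where "\<zeta> = complex_of_real c + 1 / s"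
  have imz: "Im \<zeta> = - Im s / r^2"
    unfolding \<zeta>_def using sr by (simp add: Im_divide' )
  have imz0: "Im \<zeta> \<noteq> 0" using imz ims r by simp
  have zb: "cmod \<zeta> \<le> 2"
  proof -
    have "cmod \<zeta> \<le> cmod (complex_of_real c) + cmod (1 / s)" unfolding \<zeta>_def by (rule norm_triangle_ineq)
    also have "\<dots> \<le> 1 + 1" using c1 sr r by (intro add_mono) (auto simp: norm_divide field_simps)
    finally show ?thesis by simp
  qed
  obtain z where z: "cmod z < 1" and eq: "z^2 - 2 * \<zeta> * z + 1 = 0"
    using quad_root_in_disc[of \<zeta>] imz0 by blast
  define \<rho> where "\<rho> = cmod z"
  have \<rho>5: "\<rho> \<ge> 1/5" and geo: "\<bar>Im \<zeta>\<bar> * \<rho> \<le> 1 - \<rho>" using root_geom[OF z eq zb] unfolding \<rho>_def by auto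
  have \<rho>1: "\<rho> < 1" using z \<rho>_def by simp
  obtain Uz: "isu (cx \<zeta> - y)" and Nb: "norm (inv (cx \<zeta> - y)) \<le> 4 * K' * \<rho> / (1 - \<rho>)^2"
    using cheb_resolvent[OF z eq] unfolding \<rho>_def by blast
  define N where "N = norm (inv (cx \<zeta> - y))"
  have N0: "N \<ge> 0" unfolding N_def by simp
  have NI: "N * (Im \<zeta>)^2 \<le> 20 * K'"
  proof -
    have "N * (1 - \<rho>)^2 \<le> 4 * K' * \<rho>" using Nb \<rho>1 unfolding N_def by (simp add: field_simps)
    moreover have "(\<bar>Im \<zeta>\<bar> * \<rho>)^2 \<le> (1 - \<rho>)^2"
      using geo \<rho>5 by (intro power_mono) auto
    then have "N * ((\<bar>Im \<zeta>\<bar> * \<rho>)^2) \<le> N * (1 - \<rho>)^2" using N0 by (intro mult_left_mono) auto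
    ultimately have "\<rho> * (N * (Im \<zeta>)^2 * \<rho>) \<le> \<rho> * (4 * K')"
      by (simp add: power_mult_distrib power2_eq_square algebra_simps)
    then have "N * (Im \<zeta>)^2 * \<rho> \<le> 4 * K'" by (rule mult_left_le_imp_le) (use \<rho>5 in simp)
    moreover have "N * (Im \<zeta>)^2 * (1/5) \<le> N * (Im \<zeta>)^2 * \<rho>" using \<rho>5 N0 by (intro mult_left_mono) auto
    ultimately show ?thesis by simp
  qed
  have fac: "cx \<zeta> - y = cx (1 / s) * (1 - cx s * u)"
  proof -
    have "cx (1 / s) * (1 - cx s * u) = cx (1 / s) - (cx s * cx (1 / s)) * u" by (simp add: algebra_simps)
    also have "\<dots> = cx (1 / s) - u" using cx_inv[OF s0] by simp
    finally show ?thesis unfolding \<zeta>_def uy by (simp add: cx_add)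
  qed
  have prod: "(1 - cx s * u) * (cx (1 / s) * inv (cx \<zeta> - y)) = 1"
  proof -
    have "(1 - cx s * u) * (cx (1 / s) * inv (cx \<zeta> - y)) = (cx \<zeta> - y) * inv (cx \<zeta> - y)"
      unfolding fac by (simp add: mult_ac)
    also have "\<dots> = 1" using inv_right[OF Uz] .
    finally show ?thesis .
  qed
  have U1: "isu (1 - cx s * u)" using prod unfolding isu_def by blast
  have Rs: "inv (1 - cx s * u) = cx (1 / s) * inv (cx \<zeta> - y)" using inv_unique[OF prod] .
  have nR: "norm (inv (1 - cx s * u)) = N / r" unfolding Rs N_def norm_cx_mult using sr by (simp add: norm_divide)
  have "norm (inv (1 - cx s * u)) * (Im s)^2 = N * (Im \<zeta>)^2 * r^3"
    unfolding nR imz using r by (simp add: power2_eq_square power3_eq_cube field_simps)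
  also have "\<dots> \<le> 20 * K' * r^3" using NI r by (intro mult_right_mono) auto
  finally show ?thesis using U1 by blast
qed

lemma main: "\<exists>c. \<bar>c\<bar> \<le> 1 \<and> y = of_real c"
proof -
  obtain l where nl: "\<not> isu (y - cx l)" using gelfand_mazur by blast
  have lr: "Im l = 0 \<and> \<bar>Re l\<bar> \<le> 1"
  proof (rule ccontr)
    assume "\<not> (Im l = 0 \<and> \<bar>Re l\<bar> \<le> 1)"
    then obtain z where "cmod z < 1" "z^2 - 2 * l * z + 1 = 0" using quad_root_in_disc by blast
    then have "isu (cx l - y)" using cheb_resolvent by blast
    then have "isu (- (cx l - y))" by (rule isu_neg)
    then show False using nl by simp
  qed
  define c where "c = Re l"
  have lc: "cx l = of_real c"
  proof -
    have "l = complex_of_real c" using lr unfolding c_def by (simp add: complex_eq_iff)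
    then show ?thesis by simp
  qed
  have c1: "\<bar>c\<bar> \<le> 1" using lr c_def by simp
  define u where "u = y - of_real c"
  have uM: "u \<in> M" using nl nonunit_in_M unfolding u_def lc by blast
  have uu: "u * u = 0"
  proof (rule ccontr)
    assume "u * u \<noteq> 0"
    then obtain \<psi> where c: "cfun \<psi>" and ne: "\<psi> (u * u) \<noteq> 0" using exists_cfun by blast
    have "\<psi> (u * u) = 0"
    proof (rule quasinil_square[OF uM _ c])
      fix s :: complex and r :: real assume "1 \<le> r" "cmod s = r" "Im s \<noteq> 0"
      then show "norm (inv (1 - cx s * u)) * (Im s)^2 \<le> (20 * K') * r^3"
        using spec_bound[OF _ _ _ c1 u_def] by blast
    qed
    then show False using ne by simp
  qed
  have "u = 0" using nil_finish[OF _ uu c1] u_def by simp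
  then show ?thesis using c1 u_def by auto
qed

end

theorem corollary2p4:
  fixes C :: "'g::ab_group_add \<Rightarrow> 'a::{real_normed_algebra_1, banach, comm_ring_1}"
  assumes "complex_algebra_structure TYPE('a)"
    and "\<exists>!M::'a set. maximal_ideal M"
    and "cosine_family C"
    and "bounded_family C"
  shows "\<exists>c :: 'g \<Rightarrow> real. cosine_family c \<and> bounded_family c \<and> (\<forall>g. c g \<in> {-1..1})
           \<and> (\<forall>g. C g = of_real (c g))"
proof -
  obtain j :: 'a where jj: "j * j = - 1"
    and jn: "\<forall>a b x. norm (a *\<^sub>R x + b *\<^sub>R (j * x)) = cmod (Complex a b) * norm x"
    using assms(1) unfolding complex_algebra_structure_def by blast
  obtain M :: "'a set" where maxM: "maximal_ideal M" and uniq: "\<And>M'. maximal_ideal M' \<Longrightarrow> M' = M"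
    using assms(2) by blast
  obtain K where K: "\<And>g. norm (C g) \<le> K" using assms(4) unfolding bounded_family_def by blast
  have C0: "C 0 = 1" and Cadd: "\<And>g h. C (g + h) + C (g - h) = 2 * C g * C h"
    using assms(3) unfolding cosine_family_def by blast+
  have key: "\<exists>r. \<bar>r\<bar> \<le> 1 \<and> C g = of_real r" for g
  proof -
    define a where "a n = C (\<Sum>i<n. g)" for n :: nat
    have arec: "a (Suc (Suc n)) = 2 * C g * a (Suc n) - a n" for n
    proof -
      define h where "h = (\<Sum>i<Suc n. g)"
      have e1: "(\<Sum>i<Suc (Suc n). g) = h + g" unfolding h_def by simp
      have e2: "(\<Sum>i<n. g) = h - g" unfolding h_def by simp
      have "a (Suc (Suc n)) + a n = 2 * C h * C g" unfolding a_def e1 e2 by (rule Cadd)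
      then show ?thesis unfolding a_def h_def by (simp add: algebra_simps)
    qed
    interpret mainl j M a "C g" K
    proof unfold_locales
      show "j * j = - 1" by (rule jj)
      show "\<And>a b x. norm (a *\<^sub>R x + b *\<^sub>R (j * x)) = cmod (Complex a b) * norm x" using jn by blast
      show "maximal_ideal M" by (rule maxM)
      show "\<And>M'. maximal_ideal M' \<Longrightarrow> M' = M" by (rule uniq)
      show "a 0 = 1" unfolding a_def using C0 by simp
      show "a 1 = C g" unfolding a_def by simp
      show "\<And>n. a (Suc (Suc n)) = 2 * C g * a (Suc n) - a n" by (rule arec)
      show "\<And>n. norm (a n) \<le> K" unfolding a_def by (rule K)
    qed
    show ?thesis by (rule main)
  qed
  define c where "c g = (SOME r. \<bar>r\<bar> \<le> 1 \<and> C g = of_real r)" for g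
  have cg: "\<bar>c g\<bar> \<le> 1 \<and> C g = of_real (c g)" for g
    unfolding c_def by (rule someI_ex) (rule key)
  have "cosine_family c"
    unfolding cosine_family_def
  proof (intro conjI allI)
    have "of_real (c 0) = (of_real 1 :: 'a)" using cg[of 0] C0 by simp
    then show "c 0 = 1" by (simp only: of_real_eq_iff)
  next
    fix g h
    have "of_real (c (g + h) + c (g - h)) = (of_real (2 * c g * c h) :: 'a)"
      using cg[of "g + h"] cg[of "g - h"] cg[of g] cg[of h] Cadd[of g h] by simp
    then show "c (g + h) + c (g - h) = 2 * c g * c h" by (simp only: of_real_eq_iff)
  qed
  moreover have "bounded_family c"
    unfolding bounded_family_def using cg by (intro exI[of _ 1]) auto
  moreover have "\<forall>g. c g \<in> {-1..1}" using cg by (auto simp: abs_le_iff)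
  moreover have "\<forall>g. C g = of_real (c g)" using cg by blast
  ultimately show ?thesis by blast
qed

end
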